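(* Let $Z_3(X)=\phi_3X^3+\phi_2X^2+\phi_1X+\phi_0$ be a real polynomial of degree $3$ with $\phi_3>0$ all of whose roots have strictly negative real part, and let $Z_4(X)=\varphi_4X^4+\varphi_3X^3+\varphi_2X^2+\varphi_1X+\varphi_0$ be a real polynomial of degree $4$ with $\varphi_4>0$. Then there exists $\psi_0$ such that for every $\psi>\psi_0$, all roots of the polynomial $Z_4(X)+\psi Z_3(X)$ have strictly negative real part.
   Context: A polynomial is called stable if all its (complex) roots have strictly negative real part. *)

theory Defs
  imports "HOL-Analysis.Analysis" "HOL-Computational_Algebra.Polynomial"
begin

definition stable :: "real poly \<Rightarrow> bool" where
  "stable p \<longleftrightarrow> (\<forall>z::complex. poly (map_poly complex_of_real p) z = 0 \<longrightarrow> Re z < 0)"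

end

theory Submission
  imports Defs "HOL-Computational_Algebra.Fundamental_Theorem_Algebra"
begin

lemma dist_bound:
  fixes w z :: complex
  assumes "Re w < 0" "Re z \<ge> 0"
  shows "(- Re w) / (1 + norm w - Re w) * (1 + norm z) \<le> norm (z - w)"
proof -
  define d where "d = - Re w"
  define N where "N = norm (z - w)"
  have d0: "d > 0" using assms d_def by simp
  have h1: "d \<le> N"
  proof -
    have "Re (z - w) \<le> norm (z - w)" using abs_Re_le_cmod[of "z - w"] by linarith
    thus ?thesis using assms unfolding d_def N_def by simp
  qed
  have h2: "norm z - norm w \<le> N" unfolding N_def using norm_triangle_ineq2[of z w] by simp
  have p1: "(1 + norm w) * (N - d) \<ge> 0" using h1 by simp
  have p2: "d * (N - (norm z - norm w)) \<ge> 0" using h2 d0 by simp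
  have pos: "1 + norm w + d > 0" using d0 by (simp add: add_pos_nonneg)
  have "d * (1 + norm z) \<le> (1 + norm w + d) * N"
    using p1 p2 by (simp add: algebra_simps)
  hence "d / (1 + norm w + d) * (1 + norm z) \<le> N"
    using pos by (simp add: field_simps)
  thus ?thesis unfolding d_def N_def by simp
qed

lemma map_add_smult:
  "map_poly complex_of_real (p + smult c q) =
   map_poly complex_of_real p + smult (complex_of_real c) (map_poly complex_of_real q)"
  by (intro poly_eqI) (simp add: coeff_map_poly)

theorem lemma1:
  fixes Z3 Z4 :: "real poly"
  assumes "degree Z3 = 3" and "lead_coeff Z3 > 0" and "stable Z3"
    and "degree Z4 = 4" and "lead_coeff Z4 > 0"
  shows "\<exists>\<psi>0::real. \<forall>\<psi>::real. \<psi> > \<psi>0 \<longrightarrow> stable (Z4 + smult \<psi> Z3)"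
proof -
  define P3 where "P3 = map_poly complex_of_real Z3"
  define P4 where "P4 = map_poly complex_of_real Z4"
  have dP3: "degree P3 = 3" unfolding P3_def using assms(1) by (subst degree_map_poly) auto
  have dP4: "degree P4 = 4" unfolding P4_def using assms(4) by (subst degree_map_poly) auto
  have lP3: "lead_coeff P3 = complex_of_real (lead_coeff Z3)"
    unfolding P3_def using assms(2) by (subst lead_coeff_map_poly_nz) auto
  have lP4: "lead_coeff P4 = complex_of_real (lead_coeff Z4)"
    unfolding P4_def using assms(5) by (subst lead_coeff_map_poly_nz) auto
  have P3nz: "P3 \<noteq> 0" using dP3 by auto
  have stab: "\<And>z. poly P3 z = 0 \<Longrightarrow> Re z < 0" using assms(3) unfolding stable_def P3_def by blast
  define q where "q = P4 div P3"
  define r where "r = P4 mod P3"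
  have divm: "q * P3 + r = P4" unfolding q_def r_def by simp
  have dr: "degree r \<le> 2"
  proof (cases "r = 0")
    case True thus ?thesis by simp
  next
    case False
    hence "degree r < degree P3" unfolding r_def using P3nz degree_mod_less' by blast
    thus ?thesis using dP3 by simp
  qed
  have qnz: "q \<noteq> 0"
  proof
    assume "q = 0"
    hence "P4 = r" using divm by simp
    thus False using dr dP4 by simp
  qed
  have dqP: "degree (q * P3) = degree q + 3" using degree_mult_eq[OF qnz P3nz] dP3 by simp
  have dlt: "degree r < degree (q * P3)" using dqP dr by simp
  have "degree P4 = degree (q * P3)" using divm degree_add_eq_left[OF dlt] by simp
  hence dq: "degree q = 1" using dqP dP4 by simp
  have "lead_coeff P4 = lead_coeff (q * P3)" using divm lead_coeff_add_le[OF dlt] by (simp add: add.commute)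
  hence "lead_coeff P4 = lead_coeff q * lead_coeff P3" by (simp add: lead_coeff_mult)
  hence cq1: "coeff q 1 = complex_of_real (lead_coeff Z4 / lead_coeff Z3)"
  proof -
    have nz: "complex_of_real (lead_coeff Z3) \<noteq> 0" using assms(2) by (metis less_irrefl of_real_eq_0_iff)
    have "complex_of_real (lead_coeff Z4) = coeff q 1 * complex_of_real (lead_coeff Z3)"
      using \<open>lead_coeff P4 = lead_coeff q * lead_coeff P3\<close> lP3 lP4 dq by simp
    hence "coeff q 1 = complex_of_real (lead_coeff Z4) / complex_of_real (lead_coeff Z3)"
      using nz by (simp add: field_simps)
    thus ?thesis by simp
  qed
  define b where "b = coeff q 0"
  have polyq: "poly q z = b + complex_of_real (lead_coeff Z4 / lead_coeff Z3) * z" for z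
    using dq cq1 by (simp add: poly_altdef b_def)
  have Req: "Re (poly q z) \<ge> Re b" if "Re z \<ge> 0" for z
  proof -
    have "lead_coeff Z4 / lead_coeff Z3 * Re z \<ge> 0" using that assms(2,5) by simp
    thus ?thesis using polyq by simp
  qed
  define C where "C = (\<Sum>i\<le>degree r. norm (coeff r i))"
  have C0: "C \<ge> 0" unfolding C_def by (simp add: sum_nonneg)
  have rbound: "norm (poly r z) \<le> C * (1 + norm z)^2" for z
  proof -
    have "norm (poly r z) = norm (\<Sum>i\<le>degree r. coeff r i * z ^ i)" by (simp add: poly_altdef)
    also have "\<dots> \<le> (\<Sum>i\<le>degree r. norm (coeff r i * z ^ i))" by (rule norm_sum)
    also have "\<dots> \<le> (\<Sum>i\<le>degree r. norm (coeff r i) * (1 + norm z)^2)"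
    proof (rule sum_mono)
      fix i assume "i \<in> {..degree r}"
      hence i2: "i \<le> 2" using dr by simp
      have "norm z ^ i \<le> (1 + norm z) ^ i" by (rule power_mono) auto
      also have "\<dots> \<le> (1 + norm z) ^ 2" using i2 by (intro power_increasing) auto
      finally have "norm z ^ i \<le> (1 + norm z)^2" .
      thus "norm (coeff r i * z ^ i) \<le> norm (coeff r i) * (1 + norm z)^2"
        by (simp add: norm_mult norm_power mult_left_mono)
    qed
    also have "\<dots> = C * (1 + norm z)^2" unfolding C_def by (simp add: sum_distrib_right)
    finally show ?thesis .
  qed
  obtain root where rt: "smult (lead_coeff P3) (\<Prod>i<degree P3. [:-root i, 1:]) = P3"
    using complex_poly_decompose' by blast
  have polyP3: "poly P3 z = lead_coeff P3 * (\<Prod>i<3. z - root i)" for z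
  proof -
    have "poly P3 z = poly (smult (lead_coeff P3) (\<Prod>i<degree P3. [:-root i, 1:])) z"
      using rt by simp
    thus ?thesis using dP3 by (simp add: poly_prod)
  qed
  have rootneg: "Re (root i) < 0" if "i < 3" for i
  proof -
    have "(\<Prod>j<3. root i - root j) = 0" using that by (intro prod_zero) auto
    hence "poly P3 (root i) = 0" using polyP3 by simp
    thus ?thesis by (rule stab)
  qed
  define c where "c = (\<lambda>w::complex. (- Re w) / (1 + norm w - Re w))"
  have cpos: "c (root i) > 0" if "i < 3" for i
  proof -
    have "1 + norm (root i) - Re (root i) > 0" using rootneg[OF that]
      by (smt (verit) norm_ge_zero)
    thus ?thesis using rootneg[OF that] unfolding c_def by (simp add: divide_neg_pos)
  qed
  define m where "m = lead_coeff Z3 * (\<Prod>i<3. c (root i))"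
  have m0: "m > 0" unfolding m_def using assms(2) cpos by (intro mult_pos_pos prod_pos) auto
  have P3bound: "m * (1 + norm z)^3 \<le> norm (poly P3 z)" if "Re z \<ge> 0" for z
  proof -
    have "(\<Prod>i<3. c (root i) * (1 + norm z)) \<le> (\<Prod>i<(3::nat). norm (z - root i))"
    proof (rule prod_mono)
      fix i :: nat assume "i \<in> {..<3}"
      hence i3: "i < 3" by simp
      show "0 \<le> c (root i) * (1 + norm z) \<and> c (root i) * (1 + norm z) \<le> norm (z - root i)"
      proof
        show "0 \<le> c (root i) * (1 + norm z)" using cpos[OF i3] by simp
        show "c (root i) * (1 + norm z) \<le> norm (z - root i)"
          unfolding c_def using dist_bound[OF rootneg[OF i3] that] by simp
      qed
    qed
    hence "(\<Prod>i<3. c (root i)) * (1 + norm z)^3 \<le> norm (\<Prod>i<(3::nat). z - root i)"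
      by (simp add: prod.distrib prod_norm)
    hence "lead_coeff Z3 * ((\<Prod>i<3. c (root i)) * (1 + norm z)^3) \<le> lead_coeff Z3 * norm (\<Prod>i<(3::nat). z - root i)"
      using assms(2) by (simp add: mult_left_mono)
    thus ?thesis using polyP3[of z] lP3 assms(2) unfolding m_def by (simp add: norm_mult)
  qed
  show ?thesis
  proof (intro exI allI impI)
    fix \<psi> :: real
    assume psi: "\<psi> > \<bar>Re b\<bar> + C / m"
    show "stable (Z4 + smult \<psi> Z3)"
      unfolding stable_def
    proof (intro allI impI)
      fix z :: complex
      assume "poly (map_poly complex_of_real (Z4 + smult \<psi> Z3)) z = 0"
      hence z0: "poly P4 z + \<psi> * poly P3 z = 0"
        by (simp add: map_add_smult P3_def P4_def)
      show "Re z < 0"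
      proof (rule ccontr)
        assume "\<not> Re z < 0"
        hence Rz: "Re z \<ge> 0" by simp
        have "poly P4 z = poly q z * poly P3 z + poly r z"
          using divm by (metis poly_add poly_mult)
        hence "poly r z + (poly q z + \<psi>) * poly P3 z = 0" using z0 by (simp add: algebra_simps)
        hence eq: "poly r z = - ((poly q z + \<psi>) * poly P3 z)" by (simp add: eq_neg_iff_add_eq_0)
        define t where "t = 1 + norm z"
        have t1: "t \<ge> 1" unfolding t_def by simp
        have A: "\<psi> + Re b > C / m" using psi by linarith
        hence A': "(\<psi> + Re b) * m > C" using m0 by (simp add: field_simps)
        have Apos: "\<psi> + Re b > 0" using A C0 m0 by (smt (verit) divide_nonneg_pos)
        have "\<psi> + Re b \<le> Re (poly q z + \<psi>)" using Req[OF Rz] by simp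
        also have "\<dots> \<le> norm (poly q z + \<psi>)" by (rule complex_Re_le_cmod)
        finally have B: "\<psi> + Re b \<le> norm (poly q z + \<psi>)" .
        have "C * t^2 < (\<psi> + Re b) * m * t^2" using A' t1 by simp
        also have "\<dots> \<le> (\<psi> + Re b) * m * t^3"
          using Apos m0 t1 by (intro mult_left_mono power_increasing) auto
        also have "\<dots> = (\<psi> + Re b) * (m * t^3)" by simp
        also have "\<dots> \<le> norm (poly q z + \<psi>) * norm (poly P3 z)"
          using B P3bound[OF Rz] Apos m0 t1 unfolding t_def
          by (intro mult_mono) auto
        also have "\<dots> = norm (poly r z)" using eq by (simp add: norm_mult)
        also have "\<dots> \<le> C * t^2" using rbound unfolding t_def by simp
        finally show False by simp
      qed
    qed
  qed
qed

end
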